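(* Let $\Omega_1,\Omega_2,\sigma_1,\sigma_2>0$, let $M\ge 2$ be an integer, let $p\in\{1,\dots,M\}$, and let $c\in\mathbb{C}$; set $\mathbf{c}=[1,c]^T$ and let $\mathbf{i}_p\in\mathbb{C}^M$ be the $p$-th standard basis vector. Let $X_i\sim\mathcal{CN}(0,\Omega_i)$, $\mathbf{x}_i\sim\mathcal{CN}(\mathbf{0},\sigma_i^2\mathbf{I}_2)$ (random vectors in $\mathbb{C}^2$), and $\mathbf{y}_i\sim\mathcal{CN}(\mathbf{0},\sigma_i^2\mathbf{I}_M)$ (random vectors in $\mathbb{C}^M$), $i=1,2$, all mutually independent. Define $$\mathbf{X}_0=X_1X_2\mathbf{c}+X_2\mathbf{x}_1+\mathbf{x}_2,\qquad \mathbf{Y}_0=X_1X_2\mathbf{i}_p+X_2\mathbf{y}_1+\mathbf{y}_2.$$ Then for $\mathbf{x}=[x_1,x_2]^T\in\mathbb{C}^2$ the probability density of $\mathbf{X}_0$ is $$f_{\mathbf{X}_0}(\mathbf{x})=\frac{1}{(\pi\sigma_2^2)^2}\,I\!\left(\frac{\Omega_2\sigma_1^2}{\sigma_2^2},\ \Big[1+\frac{\Omega_1}{\sigma_1^2}(1+|c|^2)\Big]\frac{\Omega_2\sigma_1^2}{\sigma_2^2},\ \frac{|x_2-cx_1|^2}{(1+|c|^2)\sigma_2^2},\ \frac{|x_1+c^*x_2|^2}{(1+|c|^2)\sigma_2^2},\ 1\right),$$ and for $\mathbf{y}=[y_1,\dots,y_M]^T\in\mathbb{C}^M$ the probability density of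 $\mathbf{Y}_0$ is $$f_{\mathbf{Y}_0}(\mathbf{y})=\frac{1}{(\pi\sigma_2^2)^M}\,I\!\left(\frac{\Omega_2\sigma_1^2}{\sigma_2^2},\ \Big(1+\frac{\Omega_1}{\sigma_1^2}\Big)\frac{\Omega_2\sigma_1^2}{\sigma_2^2},\ \frac{\|\mathbf{y}\|^2-|y_p|^2}{\sigma_2^2},\ \frac{|y_p|^2}{\sigma_2^2},\ M-1\right).$$
   Context: $\mathcal{CN}(\boldsymbol{\mu},\boldsymbol{\Sigma})$ denotes a circularly symmetric complex Gaussian distribution with mean $\boldsymbol{\mu}$ and covariance $\boldsymbol{\Sigma}$; densities on $\mathbb{C}^n$ are taken with respect to Lebesgue measure on $\mathbb{R}^{2n}$. For $\epsilon_1,\epsilon_2>0$, $\beta_1,\beta_2\ge 0$, $\lambda>0$, define $$I(\epsilon_1,\epsilon_2,\beta_1,\beta_2,\lambda)=\int_0^\infty \frac{\exp\!\Big[-\Big(x+\frac{\beta_1}{1+\epsilon_1x}+\frac{\beta_2}{1+\epsilon_2x}\Big)\Big]}{(1+\epsilon_1x)^{\lambda}(1+\epsilon_2x)}\,dx.$$ *)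

theory Defs
  imports "HOL-Probability.Probability"
begin

definition Iint :: "real \<Rightarrow> real \<Rightarrow> real \<Rightarrow> real \<Rightarrow> real \<Rightarrow> real" where
  "Iint e1 e2 b1 b2 lam =
     (LBINT x:{0..}. exp (- (x + b1 / (1 + e1 * x) + b2 / (1 + e2 * x)))
                      / ((1 + e1 * x) powr lam * (1 + e2 * x)))"

definition cgauss_density :: "real \<Rightarrow> complex \<Rightarrow> real" where
  "cgauss_density Om z = exp (- (cmod z)\<^sup>2 / Om) / (pi * Om)"

definition cgauss_vec_density :: "real \<Rightarrow> complex ^ 'n \<Rightarrow> real" where
  "cgauss_vec_density sg z =
     exp (- (norm z)\<^sup>2 / sg\<^sup>2) / (pi * sg\<^sup>2) ^ CARD('n)"

text \<open>Used in a chain to express mutual independence of a finite family.\<close>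
definition indep_rv :: "'a measure \<Rightarrow> ('a \<Rightarrow> 'b::topological_space) \<Rightarrow> ('a \<Rightarrow> 'c::topological_space) \<Rightarrow> bool" where
  "indep_rv P X Y \<longleftrightarrow> X \<in> borel_measurable P \<and> Y \<in> borel_measurable P \<and>
     (\<forall>A\<in>sets borel. \<forall>B\<in>sets borel.
        measure P (X -` A \<inter> Y -` B \<inter> space P) =
        measure P (X -` A \<inter> space P) * measure P (Y -` B \<inter> space P))"

end

theory Submission
  imports Defs
begin



lemma norm_vec_sq: "(norm (x::complex^'n))\<^sup>2 = (\<Sum>i\<in>UNIV. (cmod (x$i))\<^sup>2)"
  by (simp add: norm_vec_def L2_set_def sum_nonneg)

lemma gauss_gen:
  fixes b :: "'a::euclidean_space"
  assumes al: "al > 0"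
  shows "(\<integral>\<^sup>+u. ennreal (exp (- al * (norm (u - b))\<^sup>2)) \<partial>lborel)
       = ennreal ((1 / sqrt al) ^ DIM('a)) * (\<integral>\<^sup>+x. ennreal (exp (-(norm (x::'a))\<^sup>2)) \<partial>lborel)"
proof -
  define c where "c = 1 / sqrt al"
  have c: "c > 0" using al by (simp add: c_def)
  have cc: "al * c\<^sup>2 = 1" using al by (simp add: c_def power_divide)
  have "(\<integral>\<^sup>+u. ennreal (exp (- al * (norm (u - b))\<^sup>2)) \<partial>lborel)
     = (\<integral>\<^sup>+x. ennreal (\<bar>c\<bar> ^ DIM('a)) * ennreal (exp (- al * (norm (b + c *\<^sub>R x - b))\<^sup>2)) \<partial>lborel)"
    by (subst lborel_affine[of c b]) (use c in \<open>simp_all add: nn_integral_density nn_integral_distr\<close>)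
  also have "\<dots> = (\<integral>\<^sup>+x. ennreal (c ^ DIM('a)) * ennreal (exp (-(norm (x::'a))\<^sup>2)) \<partial>lborel)"
  proof -
    have eq: "\<And>x. al * (c * norm x)\<^sup>2 = (norm x)\<^sup>2"
      using c cc by (simp add: power_mult_distrib)
    show ?thesis using c by (intro nn_integral_cong) (simp add: eq)
  qed
  also have "\<dots> = ennreal (c ^ DIM('a)) * (\<integral>\<^sup>+x. ennreal (exp (-(norm (x::'a))\<^sup>2)) \<partial>lborel)"
    by (rule nn_integral_cmult) simp
  finally show ?thesis by (simp add: c_def)
qed

lemma dist_total:
  assumes "prob_space P" "distributed P lborel X f"
  shows "(\<integral>\<^sup>+x. f x \<partial>lborel) = 1"
proof -
  have "emeasure P (X -` UNIV \<inter> space P) = (\<integral>\<^sup>+x. f x * indicator UNIV x \<partial>lborel)"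
    using distributed_emeasure[OF assms(2), of UNIV] by simp
  then show ?thesis using prob_space.emeasure_space_1[OF assms(1)] by simp
qed

lemma G_from_density:
  fixes D :: nat
  assumes tot: "(\<integral>\<^sup>+x. ennreal (exp (-(norm (x::'a::euclidean_space))\<^sup>2 / sg\<^sup>2) / (pi * sg\<^sup>2) ^ D) \<partial>lborel) = 1"
    and sg: "sg > 0" and dim: "DIM('a) = 2 * D"
  shows "(\<integral>\<^sup>+x. ennreal (exp (-(norm (x::'a))\<^sup>2)) \<partial>lborel) = ennreal (pi ^ D)"
proof -
  let ?G = "(\<integral>\<^sup>+x. ennreal (exp (-(norm (x::'a))\<^sup>2)) \<partial>lborel)"
  have al: "1 / sg\<^sup>2 > 0" using sg by simp
  have "(\<integral>\<^sup>+x. ennreal (exp (-(norm (x::'a))\<^sup>2 / sg\<^sup>2) / (pi * sg\<^sup>2) ^ D) \<partial>lborel)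
      = (\<integral>\<^sup>+x. ennreal (1 / (pi * sg\<^sup>2) ^ D) * ennreal (exp (- (1 / sg\<^sup>2) * (norm (x - (0::'a)))\<^sup>2)) \<partial>lborel)"
    by (intro nn_integral_cong) (simp add: ennreal_mult''[symmetric])
  also have "\<dots> = ennreal (1 / (pi * sg\<^sup>2) ^ D) * (\<integral>\<^sup>+x. ennreal (exp (- (1 / sg\<^sup>2) * (norm (x - (0::'a)))\<^sup>2)) \<partial>lborel)"
    by (rule nn_integral_cmult) simp
  also have "\<dots> = ennreal (1 / (pi * sg\<^sup>2) ^ D) * (ennreal ((1 / sqrt (1 / sg\<^sup>2)) ^ DIM('a)) * ?G)"
    by (subst gauss_gen[OF al]) simp
  also have "(1 / sqrt (1 / sg\<^sup>2)) ^ DIM('a) = (sg\<^sup>2) ^ D"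
    using sg by (simp add: dim real_sqrt_divide power_mult)
  also have "ennreal (1 / (pi * sg\<^sup>2) ^ D) * (ennreal ((sg\<^sup>2) ^ D) * ?G) = ennreal (1 / pi ^ D) * ?G"
    using sg by (simp add: mult.assoc[symmetric] ennreal_mult''[symmetric] power_mult_distrib)
  finally have "ennreal (1 / pi ^ D) * ?G = 1" using tot by simp
  then have "ennreal (pi ^ D) * (ennreal (1 / pi ^ D) * ?G) = ennreal (pi ^ D)" by simp
  then show ?thesis by (simp add: mult.assoc[symmetric] ennreal_mult''[symmetric])
qed




lemma nsq_diff: "(norm (x - y))\<^sup>2 = (norm x)\<^sup>2 - 2 * (x \<bullet> y) + (norm (y::'a::real_inner))\<^sup>2"
  by (simp add: power2_norm_eq_inner inner_diff_left inner_diff_right inner_commute)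

lemma cinner_eq: "(x::complex) \<bullet> y = Re (x * cnj y)"
  by (simp add: inner_complex_def)

lemma norm_cs: "norm (b *s (c::complex^'n)) = cmod b * norm c"
proof -
  have "(norm (b *s c))\<^sup>2 = (cmod b * norm c)\<^sup>2"
    by (simp add: norm_vec_sq power_mult_distrib norm_mult sum_distrib_left)
  then show ?thesis by (simp add: power2_eq_iff_nonneg)
qed

lemma inner_cs: "(b *s (c::complex^'n)) \<bullet> y = c \<bullet> (cnj b *s y)"
  by (simp add: inner_vec_def cinner_eq algebra_simps)

lemma inner_sw: "(a *s (w::complex^'n)) \<bullet> y = a \<bullet> (\<Sum>i\<in>UNIV. cnj (w$i) * y$i)"
  by (simp add: inner_vec_def cinner_eq Re_sum sum_distrib_left algebra_simps)


definition hv :: "real \<Rightarrow> complex^'n \<Rightarrow> real" where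
  "hv S v = exp (- (norm v)\<^sup>2 / S) / (pi * S) ^ CARD('n)"

lemma gauss_D:
  fixes b :: "'a::euclidean_space"
  assumes G: "(\<integral>\<^sup>+x. ennreal (exp (-(norm (x::'a))\<^sup>2)) \<partial>lborel) = ennreal (pi ^ D)"
    and dim: "DIM('a) = 2 * D" and al: "al > 0"
  shows "(\<integral>\<^sup>+u. ennreal (exp (- al * (norm (u - b))\<^sup>2)) \<partial>lborel) = ennreal ((pi / al) ^ D)"
proof -
  have "(1 / sqrt al)\<^sup>2 = 1/al" using al by (simp add: power_divide)
  then have "(1 / sqrt al) ^ DIM('a) = (1/al) ^ D"
    by (simp add: dim power_mult)
  moreover have "(\<integral>\<^sup>+u. ennreal (exp (- al * (norm (u - b))\<^sup>2)) \<partial>lborel) = ennreal ((1 / sqrt al) ^ DIM('a)) * ennreal (pi ^ D)"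
    by (simp only: gauss_gen[OF al] G)
  ultimately show ?thesis
    by (simp add: ennreal_mult''[symmetric] power_divide)
qed

lemma aux1:
  fixes S1 S2 T be N Y P :: real
  assumes "S1 > 0" "S2 > 0" "T > 0"
  shows "(T/(S1*S2)) * (N - 2 * (P / (S2 * (T/(S1*S2)))) + be * Y / (S2 * (T/(S1*S2)))\<^sup>2) + Y / T
       = T * N / (S1 * S2) - 2 * P / S2 + be * Y * S1 / (S2 * T) + Y / T"
  using assms by (simp add: field_simps power2_eq_square)

lemma real_id1:
  fixes S1 S2 be N Y P :: real
  assumes "S1 > 0" "S2 > 0" "be \<ge> 0"
  shows "N / S1 + (Y - 2 * P + be * N) / S2 = (1 / S1 + be / S2) * (N - 2 * (P / (S2 * (1 / S1 + be / S2))) + be * Y / (S2 * (1 / S1 + be / S2))\<^sup>2) + Y / (be * S1 + S2)"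
proof -
  have T: "be * S1 + S2 > 0" using assms by (simp add: add_nonneg_pos)
  have al_eq: "1 / S1 + be / S2 = (be * S1 + S2) / (S1 * S2)" using assms by (simp add: field_simps)
  have E0: "T * N / (S1 * S2) - 2 * P / S2 + be * Y * S1 / (S2 * T) + Y / T = N / S1 + (Y - 2 * P + be * N) / S2"
    if "T = be * S1 + S2" for T
  proof -
    have "T > 0" using T that by simp
    then show ?thesis using assms(1,2) by (simp add: field_simps) (simp add: that algebra_simps)
  qed
  note E = E0[OF refl]
  show ?thesis unfolding al_eq aux1[OF assms(1,2) T] by (rule E[symmetric])
qed

lemma id_C1v:
  fixes c y :: "complex^'n" and b :: complex and S1 S2 :: real
  assumes "S1 > 0" "S2 > 0"
  defines "al \<equiv> 1 / S1 + (cmod b)\<^sup>2 / S2"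
  shows "(norm c)\<^sup>2 / S1 + (norm (y - b *s c))\<^sup>2 / S2
       = al * (norm (c - (1 / (S2 * al)) *\<^sub>R (cnj b *s y)))\<^sup>2 + (norm y)\<^sup>2 / ((cmod b)\<^sup>2 * S1 + S2)"
proof -
  have al: "al > 0" using assms by (simp add: al_def add_pos_nonneg)
  have "(norm (y - b *s c))\<^sup>2 = (norm y)\<^sup>2 - 2 * (c \<bullet> (cnj b *s y)) + (cmod b)\<^sup>2 * (norm c)\<^sup>2"
    by (simp add: nsq_diff norm_cs inner_commute[of y] inner_cs power_mult_distrib)
  moreover have "(norm (c - (1 / (S2 * al)) *\<^sub>R (cnj b *s y)))\<^sup>2
     = (norm c)\<^sup>2 - 2 * ((c \<bullet> (cnj b *s y)) / (S2 * al)) + (cmod b)\<^sup>2 * (norm y)\<^sup>2 / (S2 * al)\<^sup>2"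
    using al assms by (simp add: nsq_diff norm_cs power_mult_distrib power_divide)
  ultimately show ?thesis using real_id1[OF assms(1,2), of "(cmod b)\<^sup>2" "(norm c)\<^sup>2" "(norm y)\<^sup>2" "c \<bullet> (cnj b *s y)"]
    unfolding al_def by simp
qed

lemma aux2:
  fixes Om s T N Y P Q :: real
  assumes "Om > 0" "s > 0" "T > 0"
  shows "(T/(Om * s)) * (N - 2 * (P / (s * (T/(Om * s)))) + Q / (s * (T/(Om * s)))\<^sup>2) + Y / s - Q / (s\<^sup>2 * (T/(Om * s)))
       = T * N / (Om * s) - 2 * P / s + Q * Om / (s * T) + Y / s - Q * Om / (s * T)"
  using assms by (simp add: field_simps power2_eq_square)

lemma real_id2:
  fixes Om s K N Y P Q :: real
  assumes "Om > 0" "s > 0" "K \<ge> 0"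
  shows "N / Om + (Y - 2 * P + N * K) / s = (1 / Om + K / s) * (N - 2 * (P / (s * (1 / Om + K / s))) + Q / (s * (1 / Om + K / s))\<^sup>2) + Y / s - Q / (s\<^sup>2 * (1 / Om + K / s))"
proof -
  have T: "s + Om * K > 0" using assms by (simp add: add_pos_nonneg)
  have al_eq: "1 / Om + K / s = (s + Om * K) / (Om * s)" using assms by (simp add: field_simps)
  have E0: "T * N / (Om * s) - 2 * P / s + Q * Om / (s * T) + Y / s - Q * Om / (s * T) = N / Om + (Y - 2 * P + N * K) / s"
    if "T = s + Om * K" for T
  proof -
    have "T > 0" using T that by simp
    then show ?thesis using assms(1,2) by (simp add: field_simps) (simp add: that algebra_simps)
  qed
  note E = E0[OF refl]
  show ?thesis unfolding al_eq aux2[OF assms(1,2) T] by (rule E[symmetric])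
qed

lemma id_C2:
  fixes a B :: complex and Om s K Y :: real
  assumes "Om > 0" "s > 0" "K \<ge> 0"
  defines "al \<equiv> 1 / Om + K / s"
  shows "(cmod a)\<^sup>2 / Om + (Y - 2 * (a \<bullet> B) + (cmod a)\<^sup>2 * K) / s
       = al * (cmod (a - (1 / (s * al)) *\<^sub>R B))\<^sup>2 + Y / s - (cmod B)\<^sup>2 / (s\<^sup>2 * al)"
proof -
  have al: "al > 0" using assms by (simp add: al_def add_pos_nonneg)
  have "(cmod (a - (1 / (s * al)) *\<^sub>R B))\<^sup>2 = (cmod a)\<^sup>2 - 2 * ((a \<bullet> B) / (s * al)) + (cmod B)\<^sup>2 / (s * al)\<^sup>2"
    using al assms by (simp add: nsq_diff power_mult_distrib power_divide)
  then show ?thesis using real_id2[OF assms(1,2,3), of "(cmod a)\<^sup>2" Y "a \<bullet> B" "(cmod B)\<^sup>2"]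
    unfolding al_def by simp
qed


lemma conv:
  fixes y :: "complex^'n" and b :: complex
  assumes Gv: "(\<integral>\<^sup>+x. ennreal (exp (-(norm (x::complex^'n))\<^sup>2)) \<partial>lborel) = ennreal (pi ^ CARD('n))"
    and S1: "S1 > 0" and S2: "S2 > 0"
  shows "(\<integral>\<^sup>+c. ennreal (hv S1 c * hv S2 (y - b *s c)) \<partial>lborel) = ennreal (hv ((cmod b)\<^sup>2 * S1 + S2) y)"
proof -
  define al where "al = 1 / S1 + (cmod b)\<^sup>2 / S2"
  define m where "m = (1 / (S2 * al)) *\<^sub>R (cnj b *s y)"
  define S where "S = (cmod b)\<^sup>2 * S1 + S2"
  have al: "al > 0" using S1 S2 by (simp add: al_def add_pos_nonneg)
  have S: "S > 0" using S1 S2 by (simp add: S_def add_nonneg_pos)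
  have SS: "S1 * S2 * al = S" using S1 S2 by (simp add: al_def S_def field_simps)
  define K where "K = exp (- (norm y)\<^sup>2 / S) / ((pi * S1) ^ CARD('n) * (pi * S2) ^ CARD('n))"
  have pt: "hv S1 c * hv S2 (y - b *s c) = K * exp (- al * (norm (c - m))\<^sup>2)" for c
  proof -
    have "hv S1 c * hv S2 (y - b *s c) = exp (- ((norm c)\<^sup>2 / S1 + (norm (y - b *s c))\<^sup>2 / S2)) / ((pi * S1) ^ CARD('n) * (pi * S2) ^ CARD('n))"
      by (simp add: hv_def exp_add[symmetric] diff_divide_distrib add_divide_distrib)
    also have "(norm c)\<^sup>2 / S1 + (norm (y - b *s c))\<^sup>2 / S2 = al * (norm (c - m))\<^sup>2 + (norm y)\<^sup>2 / S"
      unfolding al_def m_def S_def by (rule id_C1v[OF S1 S2])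
    finally show ?thesis by (simp add: K_def exp_add exp_diff exp_minus field_simps)
  qed
  have "(\<integral>\<^sup>+c. ennreal (hv S1 c * hv S2 (y - b *s c)) \<partial>lborel) = (\<integral>\<^sup>+c. ennreal K * ennreal (exp (- al * (norm (c - m))\<^sup>2)) \<partial>lborel)"
    by (intro nn_integral_cong, subst ennreal_mult''[symmetric]) (simp_all add: pt)
  also have "\<dots> = ennreal K * (\<integral>\<^sup>+c. ennreal (exp (- al * (norm (c - m))\<^sup>2)) \<partial>lborel)"
    by (rule nn_integral_cmult) simp
  also have "(\<integral>\<^sup>+c. ennreal (exp (- al * (norm (c - m))\<^sup>2)) \<partial>lborel) = ennreal ((pi / al) ^ CARD('n))"
    by (rule gauss_D[OF Gv _ al]) simp
  also have "ennreal K * ennreal ((pi / al) ^ CARD('n)) = ennreal (K * (pi / al) ^ CARD('n))"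
    using al by (simp add: ennreal_mult'')
  also have "K * (pi / al) ^ CARD('n) = hv S y"
  proof -
    have "K * (pi / al) ^ CARD('n) = exp (- (norm y)\<^sup>2 / S) / (pi * (S1 * S2 * al)) ^ CARD('n)"
      using S1 S2 al by (simp add: K_def power_divide power_mult_distrib field_simps)
    then show ?thesis by (simp add: SS hv_def)
  qed
  finally show ?thesis by (simp add: S_def)
qed


definition cB :: "complex^'n \<Rightarrow> complex^'n \<Rightarrow> complex" where
  "cB w y = (\<Sum>i\<in>UNIV. cnj (w$i) * y$i)"

lemma cint:
  fixes y w :: "complex^'n"
  assumes Gc: "(\<integral>\<^sup>+x. ennreal (exp (-(norm (x::complex))\<^sup>2)) \<partial>lborel) = ennreal pi"
    and Om: "Om > 0" and s: "s > 0"
  shows "(\<integral>\<^sup>+a. ennreal (exp (- (cmod a)\<^sup>2 / Om) / (pi * Om) * hv s (y - a *s w)) \<partial>lborel)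
     = ennreal (s / (s + Om * (norm w)\<^sup>2) / (pi * s) ^ CARD('n)
          * exp (- (norm y)\<^sup>2 / s + Om * (cmod (cB w y))\<^sup>2 / (s * (s + Om * (norm w)\<^sup>2))))"
proof -
  define K where "K = (norm w)\<^sup>2"
  define B where "B = cB w y"
  define Y where "Y = (norm y)\<^sup>2"
  define al where "al = 1 / Om + K / s"
  define m where "m = (1 / (s * al)) *\<^sub>R B"
  have K: "K \<ge> 0" by (simp add: K_def)
  have al: "al > 0" using Om s K by (simp add: al_def add_pos_nonneg)
  have T: "s + Om * K > 0" using Om s K by (simp add: add_pos_nonneg)
  have Oal: "Om * al = (s + Om * K) / s" using Om s by (simp add: al_def field_simps)
  define C where "C = exp (- (Y / s - (cmod B)\<^sup>2 / (s\<^sup>2 * al))) / ((pi * Om) * (pi * s) ^ CARD('n))"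
  have ex: "(norm (y - a *s w))\<^sup>2 = Y - 2 * (a \<bullet> B) + (cmod a)\<^sup>2 * K" for a
    by (simp add: nsq_diff norm_cs inner_commute[of y] inner_sw power_mult_distrib Y_def B_def K_def cB_def)
  have pt: "exp (- (cmod a)\<^sup>2 / Om) / (pi * Om) * hv s (y - a *s w) = C * exp (- al * (cmod (a - m))\<^sup>2)" for a
  proof -
    have "exp (- (cmod a)\<^sup>2 / Om) / (pi * Om) * hv s (y - a *s w)
       = exp (- ((cmod a)\<^sup>2 / Om + (Y - 2 * (a \<bullet> B) + (cmod a)\<^sup>2 * K) / s)) / ((pi * Om) * (pi * s) ^ CARD('n))"
      by (simp add: hv_def ex exp_add[symmetric] diff_divide_distrib add_divide_distrib)
    also have "(cmod a)\<^sup>2 / Om + (Y - 2 * (a \<bullet> B) + (cmod a)\<^sup>2 * K) / s = al * (cmod (a - m))\<^sup>2 + (Y / s - (cmod B)\<^sup>2 / (s\<^sup>2 * al))"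
      using id_C2[OF Om s K, of a Y B] unfolding al_def m_def by simp
    finally show ?thesis by (simp add: C_def exp_add exp_diff exp_minus field_simps)
  qed
  have "(\<integral>\<^sup>+a. ennreal (exp (- (cmod a)\<^sup>2 / Om) / (pi * Om) * hv s (y - a *s w)) \<partial>lborel)
      = (\<integral>\<^sup>+a. ennreal C * ennreal (exp (- al * (norm (a - m))\<^sup>2)) \<partial>lborel)"
    unfolding pt by (intro nn_integral_cong, subst ennreal_mult''[symmetric]) simp_all
  also have "\<dots> = ennreal C * (\<integral>\<^sup>+a. ennreal (exp (- al * (norm (a - m))\<^sup>2)) \<partial>lborel)"
    by (rule nn_integral_cmult) simp
  also have "(\<integral>\<^sup>+a. ennreal (exp (- al * (norm (a - m))\<^sup>2)) \<partial>lborel) = ennreal ((pi / al) ^ 1)"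
    by (rule gauss_D[OF _ _ al]) (use Gc in simp_all)
  also have "ennreal C * ennreal ((pi / al) ^ 1) = ennreal (C * (pi / al))"
    using al by (subst ennreal_mult'') simp_all
  also have "C * (pi / al) = s / (s + Om * K) / (pi * s) ^ CARD('n) * exp (- Y / s + Om * (cmod B)\<^sup>2 / (s * (s + Om * K)))"
  proof -
    have 1: "C * (pi / al) = exp (- (Y / s - (cmod B)\<^sup>2 / (s\<^sup>2 * al))) / ((Om * al) * (pi * s) ^ CARD('n))"
      using Om s al by (simp add: C_def field_simps)
    have 2: "(cmod B)\<^sup>2 / (s\<^sup>2 * al) = Om * (cmod B)\<^sup>2 / (s * (s + Om * K))"
    proof -
      have "s + Om * K = Om * al * s" using Oal s by (simp add: field_simps)
      then show ?thesis using Om s al by (simp add: field_simps power2_eq_square)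
    qed
    have gen: "\<And>T X P. T > 0 \<Longrightarrow> P > 0 \<Longrightarrow> exp (-(Y/s - X)) / ((T/s) * P) = s/T/P * exp(-Y/s + X)"
      using s by (simp add: field_simps)
    show ?thesis unfolding 1 2 Oal using s T by (intro gen) simp_all
  qed
  finally show ?thesis by (simp add: K_def B_def Y_def)
qed


lemma ball_c: "emeasure lborel (ball (0::complex) r) = ennreal (pi * r\<^sup>2)" if "r \<ge> 0"
  using emeasure_ball[OF that, of "0::complex"] by (simp add: unit_ball_vol_2)

lemma lt_sqrt_sq: "0 \<le> a \<Longrightarrow> 0 \<le> b \<Longrightarrow> a < sqrt b \<Longrightarrow> a\<^sup>2 < b"
  by (metis real_sqrt_abs real_sqrt_less_iff abs_of_nonneg)

lemma radial_measure:
  "distr (lborel :: complex measure) borel (\<lambda>z. - (cmod z)\<^sup>2) = density lborel (\<lambda>t. ennreal pi * indicator {..0} t)"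
proof (rule measure_eqI_lessThan)
  have E1: "emeasure (distr (lborel :: complex measure) borel (\<lambda>z. - (cmod z)\<^sup>2)) {x<..} = ennreal (pi * max 0 (-x))" for x
  proof -
    have "emeasure (distr (lborel :: complex measure) borel (\<lambda>z. - (cmod z)\<^sup>2)) {x<..}
        = emeasure lborel {z::complex. x < - (cmod z)\<^sup>2}"
      by (subst emeasure_distr) (auto intro!: arg_cong2[where f=emeasure])
    also have "\<dots> = ennreal (pi * max 0 (-x))"
    proof (cases "x < 0")
      case True
      have "{z::complex. x < - (cmod z)\<^sup>2} = ball 0 (sqrt (-x))"
      proof (rule set_eqI)
        fix z :: complex
        have "x < -(cmod z)\<^sup>2 \<longleftrightarrow> (cmod z)\<^sup>2 < -x" by linarith
        also have "\<dots> \<longleftrightarrow> cmod z < sqrt (-x)"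
          using real_less_rsqrt[of "cmod z" "-x"] lt_sqrt_sq[of "cmod z" "-x"] True by auto
        finally show "z \<in> {z::complex. x < - (cmod z)\<^sup>2} \<longleftrightarrow> z \<in> ball 0 (sqrt (-x))" by simp
      qed
      moreover have "(sqrt (-x))\<^sup>2 = -x" using True by simp
      ultimately show ?thesis using True ball_c[of "sqrt (-x)"] by simp
    next
      case False
      then have "{z::complex. x < - (cmod z)\<^sup>2} = {}"
        by (auto simp: not_less) (smt (verit) zero_le_power2)
      then show ?thesis using False by simp
    qed
    finally show ?thesis .
  qed
  have E2: "emeasure (density lborel (\<lambda>t. ennreal pi * indicator {..0} t)) {x<..} = ennreal (pi * max 0 (-x))" for x
  proof -
    have "emeasure (density lborel (\<lambda>t. ennreal pi * indicator {..0} t)) {x<..}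
        = (\<integral>\<^sup>+t. ennreal pi * indicator {x<..0} t \<partial>lborel)"
      by (subst emeasure_density) (auto intro!: nn_integral_cong split: split_indicator)
    also have "\<dots> = ennreal pi * emeasure lborel {x<..0}"
      by (simp add: nn_integral_cmult)
    also have "\<dots> = ennreal (pi * max 0 (-x))"
      by (cases "x \<le> 0") (auto simp: ennreal_mult''[symmetric])
    finally show ?thesis .
  qed
  show "\<And>x. emeasure (distr lborel borel (\<lambda>z. - (cmod z)\<^sup>2)) {x<..} < \<infinity>"
    using E1 by simp
  show "\<And>x. emeasure (distr lborel borel (\<lambda>z. - (cmod z)\<^sup>2)) {x<..} = emeasure (density lborel (\<lambda>t. ennreal pi * indicator {..0} t)) {x<..}"
    using E1 E2 by simp
qed simp_all

lemma radial:
  fixes f :: "real \<Rightarrow> ennreal"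
  assumes f[measurable]: "f \<in> borel_measurable borel"
  shows "(\<integral>\<^sup>+z. f ((cmod (z::complex))\<^sup>2) \<partial>lborel) = ennreal pi * (\<integral>\<^sup>+t. f t * indicator {0..} t \<partial>lborel)"
proof -
  have "(\<integral>\<^sup>+z. f ((cmod (z::complex))\<^sup>2) \<partial>lborel) = (\<integral>\<^sup>+t. f (- t) \<partial>distr (lborel :: complex measure) borel (\<lambda>z. - (cmod z)\<^sup>2))"
    by (subst nn_integral_distr) auto
  also have "\<dots> = (\<integral>\<^sup>+t. ennreal pi * indicator {..0} t * f (- t) \<partial>lborel)"
    unfolding radial_measure by (subst nn_integral_density) auto
  also have "\<dots> = ennreal pi * (\<integral>\<^sup>+t. indicator {..0} t * f (- t) \<partial>lborel)"
    by (subst nn_integral_cmult[symmetric]) (auto simp: mult.assoc)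
  also have "(\<integral>\<^sup>+t. indicator {..0} t * f (- t) \<partial>lborel) = (\<integral>\<^sup>+t. indicator {..0} (0 + (-1) * t) * f (- (0 + (-1) * t)) \<partial>lborel)"
    by (subst nn_integral_real_affine[where c="-1" and t=0]) auto
  also have "\<dots> = (\<integral>\<^sup>+t. f t * indicator {0..} t \<partial>lborel)"
    by (intro nn_integral_cong) (auto split: split_indicator)
  finally show ?thesis .
qed


lemma continuous_on_smult_vec[continuous_intros]:
  fixes f :: "'b::topological_space \<Rightarrow> 'a::real_normed_algebra"
  shows "continuous_on S f \<Longrightarrow> continuous_on S g \<Longrightarrow> continuous_on S (\<lambda>x. f x *s g x)"
  unfolding vector_scalar_mult_def by (intro continuous_intros)

lemma indep_rv_comp:
  fixes X :: "'a \<Rightarrow> 'b::topological_space" and Y :: "'a \<Rightarrow> 'c::topological_space" and g :: "'c \<Rightarrow> 'd::topological_space"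
  assumes I: "indep_rv P X Y" and g: "g \<in> borel_measurable borel"
  shows "indep_rv P X (\<lambda>w. g (Y w))"
  unfolding indep_rv_def
proof (intro conjI ballI)
  show "X \<in> borel_measurable P" using I by (simp add: indep_rv_def)
  show "(\<lambda>w. g (Y w)) \<in> borel_measurable P" using I g by (auto simp: indep_rv_def)
  fix A :: "'b set" and B :: "'d set" assume A: "A \<in> sets borel" and B: "B \<in> sets borel"
  have gB: "g -` B \<in> sets borel" using g B by (metis measurable_sets space_borel vimage_Int Int_UNIV_right)
  have e: "(\<lambda>w. g (Y w)) -` B = Y -` (g -` B)" by auto
  show "measure P (X -` A \<inter> (\<lambda>w. g (Y w)) -` B \<inter> space P) = measure P (X -` A \<inter> space P) * measure P ((\<lambda>w. g (Y w)) -` B \<inter> space P)"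
    unfolding e using I A gB by (simp add: indep_rv_def)
qed

lemma trans_int:
  fixes f :: "'a::euclidean_space \<Rightarrow> ennreal"
  assumes f: "f \<in> borel_measurable borel"
  shows "(\<integral>\<^sup>+d. f (m + d) \<partial>lborel) = (\<integral>\<^sup>+x. f x \<partial>lborel)"
proof -
  have "(\<integral>\<^sup>+x. f x \<partial>lborel) = (\<integral>\<^sup>+x. f x \<partial>distr lborel borel ((+) m))"
    by (simp add: lborel_distr_plus)
  also have "\<dots> = (\<integral>\<^sup>+d. f (m + d) \<partial>lborel)"
    using f by (subst nn_integral_distr) auto
  finally show ?thesis by simp
qed


lemma cont_nth: "continuous_on UNIV (\<lambda>x::'b::real_normed_vector^'n. x $ i)"
  by (intro continuous_on_component continuous_on_id)

lemma meas_vec_nth[measurable (raw)]: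
  fixes f :: "'a \<Rightarrow> 'b::real_normed_vector^'n"
  shows "f \<in> borel_measurable M \<Longrightarrow> (\<lambda>x. f x $ i) \<in> borel_measurable M"
  using measurable_compose[OF _ borel_measurable_continuous_onI[OF cont_nth]] by blast

lemma cont_sm: "continuous_on UNIV (\<lambda>p::complex \<times> (complex^'n). fst p *s snd p)"
  unfolding vector_scalar_mult_def
  by (intro continuous_on_vec_lambda continuous_on_mult continuous_on_component continuous_on_fst continuous_on_snd continuous_on_id)

lemma meas_smult[measurable (raw)]:
  fixes f :: "'a \<Rightarrow> complex" and g :: "'a \<Rightarrow> complex^'n"
  shows "f \<in> borel_measurable M \<Longrightarrow> g \<in> borel_measurable M \<Longrightarrow> (\<lambda>x. f x *s g x) \<in> borel_measurable M"
proof -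
  assume f: "f \<in> borel_measurable M" and g: "g \<in> borel_measurable M"
  have "(\<lambda>x. (f x, g x)) \<in> borel_measurable M" using f g by (rule borel_measurable_Pair)
  from measurable_compose[OF this borel_measurable_continuous_onI[OF cont_sm]] show ?thesis by simp
qed

lemma cgd_meas[measurable]: "(\<lambda>z. cgauss_density Om z) \<in> borel_measurable borel"
  unfolding cgauss_density_def by measurable


lemma nn_pair:
  fixes f :: "'a::euclidean_space \<times> 'b::euclidean_space \<Rightarrow> ennreal"
  assumes f: "f \<in> borel_measurable (borel \<Otimes>\<^sub>M borel)"
  shows "(\<integral>\<^sup>+p. f p \<partial>lborel) = (\<integral>\<^sup>+x. \<integral>\<^sup>+y. f (x, y) \<partial>lborel \<partial>lborel)"
proof -
  have "f \<in> borel_measurable (lborel \<Otimes>\<^sub>M lborel)" using f by (simp add: measurable_cong_sets[OF sets_pair_measure_cong[OF sets_lborel sets_lborel] refl])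
  then show ?thesis by (simp add: lborel.nn_integral_fst lborel_prod)
qed

lemma swap:
  fixes f :: "'a::euclidean_space \<Rightarrow> 'b::euclidean_space \<Rightarrow> ennreal"
  assumes f: "case_prod f \<in> borel_measurable (borel \<Otimes>\<^sub>M borel)"
  shows "(\<integral>\<^sup>+x. \<integral>\<^sup>+y. f x y \<partial>lborel \<partial>lborel) = (\<integral>\<^sup>+y. \<integral>\<^sup>+x. f x y \<partial>lborel \<partial>lborel)"
proof -
  have "case_prod f \<in> borel_measurable (lborel \<Otimes>\<^sub>M lborel)" using f by (simp add: measurable_cong_sets[OF sets_pair_measure_cong[OF sets_lborel sets_lborel] refl])
  then show ?thesis by (rule lborel_pair.Fubini'[symmetric])
qed


lemma joint:
  fixes X :: "'a \<Rightarrow> 'b::euclidean_space" and Y :: "'a \<Rightarrow> 'c::euclidean_space"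
  assumes P: "prob_space P" and I: "indep_rv P X Y"
    and DX: "distributed P lborel X Px" and DY: "distributed P lborel Y Py"
  shows "distributed P lborel (\<lambda>w. (X w, Y w)) (\<lambda>(x, y). Px x * Py y)"
proof -
  interpret prob_space P by (rule P)
  have X[measurable]: "X \<in> borel_measurable P" and Y[measurable]: "Y \<in> borel_measurable P"
    and ind: "\<And>A B. A \<in> sets borel \<Longrightarrow> B \<in> sets borel \<Longrightarrow>
        measure P (X -` A \<inter> Y -` B \<inter> space P) = measure P (X -` A \<inter> space P) * measure P (Y -` B \<inter> space P)"
    using I unfolding indep_rv_def by auto
  have sfX: "sigma_finite_measure (distr P lborel X)"
  proof -
    interpret Q: prob_space "distr P lborel X" by (rule prob_space_distr) simp
    show ?thesis ..
  qed
  have sfY: "sigma_finite_measure (distr P lborel Y)"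
  proof -
    interpret Q: prob_space "distr P lborel Y" by (rule prob_space_distr) simp
    show ?thesis ..
  qed
  have eq: "distr P lborel X \<Otimes>\<^sub>M distr P lborel Y = distr P (lborel \<Otimes>\<^sub>M lborel) (\<lambda>x. (X x, Y x))"
  proof (rule pair_measure_eqI[OF sfX sfY])
    show "sets (distr P lborel X \<Otimes>\<^sub>M distr P lborel Y) = sets (distr P (lborel \<Otimes>\<^sub>M lborel) (\<lambda>x. (X x, Y x)))"
      by (simp add: sets_pair_measure_cong[OF sets_distr sets_distr])
    fix A B assume A: "A \<in> sets (distr P lborel X)" and B: "B \<in> sets (distr P lborel Y)"
    then have A': "A \<in> sets borel" and B': "B \<in> sets borel" by auto
    have "emeasure (distr P (lborel \<Otimes>\<^sub>M lborel) (\<lambda>x. (X x, Y x))) (A \<times> B) = emeasure P (X -` A \<inter> Y -` B \<inter> space P)"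
      using A' B' by (subst emeasure_distr) (auto intro!: arg_cong2[where f=emeasure])
    also have "\<dots> = ennreal (measure P (X -` A \<inter> space P) * measure P (Y -` B \<inter> space P))"
      using ind[OF A' B'] by (simp add: emeasure_eq_measure)
    also have "\<dots> = emeasure (distr P lborel X) A * emeasure (distr P lborel Y) B"
      using A' B' by (simp add: emeasure_distr emeasure_eq_measure ennreal_mult)
    finally show "emeasure (distr P lborel X) A * emeasure (distr P lborel Y) B = emeasure (distr P (lborel \<Otimes>\<^sub>M lborel) (\<lambda>x. (X x, Y x))) (A \<times> B)" ..
  qed
  have "distributed P (lborel \<Otimes>\<^sub>M lborel) (\<lambda>w. (X w, Y w)) (\<lambda>(x, y). Px x * Py y)"
    by (rule distributed_joint_indep'[OF _ _ DX DY eq]) (simp_all add: lborel.sigma_finite_measure_axioms)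
  then show ?thesis by (simp add: lborel_prod)
qed


lemma exp_int_finite: "(\<integral>\<^sup>+x. ennreal (indicator {0..} x * exp (- x)) \<partial>lborel) = 1"
proof -
  interpret prob_space "density lborel (exponential_density 1)"
    by (rule prob_space_exponential_density) simp
  have "emeasure (density lborel (exponential_density 1)) UNIV = 1"
    using emeasure_space_1 by simp
  then have "(\<integral>\<^sup>+x. ennreal (exponential_density 1 x) \<partial>lborel) = 1"
    by (simp add: emeasure_density)
  moreover have "\<And>x. exponential_density 1 x = indicator {0..} x * exp (- x)"
    by (simp add: exponential_density_def split: split_indicator)
  ultimately show ?thesis by simp
qed

lemma neg_abs_le_div:
  fixes A b :: real
  assumes "A \<ge> 1" shows "- \<bar>b\<bar> \<le> b / A"
proof (cases "b \<ge> 0")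
  case True
  have "0 \<le> b / A" using True assms by simp
  then show ?thesis using True by linarith
next
  case False
  then have "b \<le> b / A" using assms by (simp add: le_divide_eq mult_le_cancel_left1 less_le_trans[of 0 1 A])
  then show ?thesis using False by simp
qed

lemma iint_nn:
  assumes e1: "e1 \<ge> 0" and e2: "e2 \<ge> 0" and lam: "lam \<ge> 0"
  shows "ennreal (Iint e1 e2 b1 b2 lam) = (\<integral>\<^sup>+x. ennreal (indicator {0..} x *
      (exp (- (x + b1 / (1 + e1 * x) + b2 / (1 + e2 * x))) / ((1 + e1 * x) powr lam * (1 + e2 * x)))) \<partial>lborel)"
proof -
  define \<phi> where "\<phi> x = exp (- (x + b1 / (1 + e1 * x) + b2 / (1 + e2 * x))) / ((1 + e1 * x) powr lam * (1 + e2 * x))" for x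
  define \<psi> where "\<psi> x = indicator {0..} x * \<phi> x" for x
  have [measurable]: "\<psi> \<in> borel_measurable borel" unfolding \<psi>_def \<phi>_def by measurable
  have nn: "\<psi> x \<ge> 0" for x
    unfolding \<psi>_def \<phi>_def using e1 e2
    by (auto split: split_indicator intro!: divide_nonneg_pos mult_pos_pos add_pos_nonneg)
  have bd: "\<psi> x \<le> exp (\<bar>b1\<bar> + \<bar>b2\<bar>) * (indicator {0..} x * exp (- x))" for x
  proof (cases "x \<ge> 0")
    case True
    have A: "1 + e1 * x \<ge> 1" and B: "1 + e2 * x \<ge> 1" using True e1 e2 by auto
    have "b1 / (1 + e1 * x) \<ge> - \<bar>b1\<bar>" by (rule neg_abs_le_div[OF A])
    moreover have "b2 / (1 + e2 * x) \<ge> - \<bar>b2\<bar>" by (rule neg_abs_le_div[OF B])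
    ultimately have E: "exp (- (x + b1 / (1 + e1 * x) + b2 / (1 + e2 * x))) \<le> exp (\<bar>b1\<bar> + \<bar>b2\<bar>) * exp (- x)"
      by (simp add: exp_add[symmetric])
    have P: "1 \<le> (1 + e1 * x) powr lam" by (rule ge_one_powr_ge_zero[OF A lam])
    have D: "1 * 1 \<le> (1 + e1 * x) powr lam * (1 + e2 * x)"
      by (rule mult_mono[OF P B]) simp_all
    have "\<phi> x \<le> exp (- (x + b1 / (1 + e1 * x) + b2 / (1 + e2 * x))) / 1"
      unfolding \<phi>_def by (rule divide_left_mono) (use D in simp_all)
    then show ?thesis using E True by (simp add: \<psi>_def)
  qed (simp add: \<psi>_def)
  have fin: "(\<integral>\<^sup>+x. ennreal (\<psi> x) \<partial>lborel) < \<infinity>"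
  proof -
    have "(\<integral>\<^sup>+x. ennreal (\<psi> x) \<partial>lborel) \<le> (\<integral>\<^sup>+x. ennreal (exp (\<bar>b1\<bar> + \<bar>b2\<bar>)) * ennreal (indicator {0..} x * exp (- x)) \<partial>lborel)"
      by (intro nn_integral_mono) (simp add: bd ennreal_mult''[symmetric] ennreal_leI)
    also have "\<dots> = ennreal (exp (\<bar>b1\<bar> + \<bar>b2\<bar>))"
      by (subst nn_integral_cmult) (simp_all add: exp_int_finite)
    finally show ?thesis by (simp add: le_less_trans)
  qed
  have int: "integrable lborel \<psi>"
    by (rule integrableI_nonneg) (use nn fin in auto)
  have "Iint e1 e2 b1 b2 lam = integral\<^sup>L lborel \<psi>"
    unfolding Iint_def set_lebesgue_integral_def \<psi>_def \<phi>_def by simp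
  then show ?thesis using nn_integral_eq_integral[OF int] nn by (simp add: \<psi>_def \<phi>_def)
qed


definition Rf :: "real \<Rightarrow> real \<Rightarrow> real \<Rightarrow> real \<Rightarrow> real \<Rightarrow> real \<Rightarrow> nat \<Rightarrow> real \<Rightarrow> real" where
  "Rf Om1 s1 s2 K0 Y q n t = (t * s1\<^sup>2 + s2\<^sup>2) / ((t * s1\<^sup>2 + s2\<^sup>2) + Om1 * (t * K0)) / (pi * (t * s1\<^sup>2 + s2\<^sup>2)) ^ n
     * exp (- Y / (t * s1\<^sup>2 + s2\<^sup>2) + Om1 * (t * q) / ((t * s1\<^sup>2 + s2\<^sup>2) * ((t * s1\<^sup>2 + s2\<^sup>2) + Om1 * (t * K0))))"

lemma exp_gen: "exp (- t) * (C / D * exp (- (x + z))) = C * (exp (- (t + x + z)) / (D::real))"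
proof -
  have "exp (- (t + x + z)) = exp (- t) * exp (- (x + z))" by (simp add: exp_add[symmetric] algebra_simps)
  then show ?thesis by simp
qed

lemma alg_R:
  assumes tau: "tau \<ge> 0" and pos: "Om1 > 0" "Om2 > 0" "s1 > 0" "s2 > 0" and K0: "K0 > 0" and n: "n \<ge> 1"
  shows "exp (- tau) * Rf Om1 s1 s2 K0 Y q n (Om2 * tau)
    = 1 / (pi * s2\<^sup>2) ^ n * (exp (- (tau + ((Y - q / K0) / s2\<^sup>2) / (1 + (Om2 * s1\<^sup>2 / s2\<^sup>2) * tau)
        + (q / (K0 * s2\<^sup>2)) / (1 + ((1 + Om1 / s1\<^sup>2 * K0) * (Om2 * s1\<^sup>2 / s2\<^sup>2)) * tau)))
      / ((1 + (Om2 * s1\<^sup>2 / s2\<^sup>2) * tau) powr (real n - 1) * (1 + ((1 + Om1 / s1\<^sup>2 * K0) * (Om2 * s1\<^sup>2 / s2\<^sup>2)) * tau)))"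
proof -
  define A where "A = 1 + (Om2 * s1\<^sup>2 / s2\<^sup>2) * tau"
  define B where "B = 1 + ((1 + Om1 / s1\<^sup>2 * K0) * (Om2 * s1\<^sup>2 / s2\<^sup>2)) * tau"
  have s2q: "s2\<^sup>2 > 0" "s1\<^sup>2 > 0" using pos by simp_all
  have A: "A \<ge> 1" using tau pos by (simp add: A_def)
  have B: "B \<ge> 1" using tau pos K0 by (simp add: B_def)
  have s: "Om2 * tau * s1\<^sup>2 + s2\<^sup>2 = s2\<^sup>2 * A" using s2q by (simp add: A_def field_simps)
  have s': "s2\<^sup>2 * A + Om1 * (Om2 * tau * K0) = s2\<^sup>2 * B" using s2q by (simp add: A_def B_def field_simps)
  have BA: "B - A = Om1 * K0 * Om2 * tau / s2\<^sup>2" using s2q by (simp add: A_def B_def field_simps)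
  have pw: "A powr (real n - 1) = A ^ (n - 1)"
    using A n by (simp add: powr_realpow[symmetric] of_nat_diff)
  have An: "A ^ n = A ^ (n - 1) * A" using n power_minus_mult[of n A] by simp
  have pre: "s2\<^sup>2 * A / (s2\<^sup>2 * B) / (pi * (s2\<^sup>2 * A)) ^ n = 1 / (pi * s2\<^sup>2) ^ n / (A ^ (n - 1) * B)"
    using A B s2q by (simp add: power_mult_distrib An field_simps)
  have ex: "- Y / (s2\<^sup>2 * A) + Om1 * (Om2 * tau * q) / (s2\<^sup>2 * A * (s2\<^sup>2 * B))
      = - (((Y - q / K0) / s2\<^sup>2) / A + (q / (K0 * s2\<^sup>2)) / B)"
  proof -
    have "Om1 * (Om2 * tau * q) / (s2\<^sup>2 * A * (s2\<^sup>2 * B)) = q / (K0 * s2\<^sup>2) * ((B - A) / (A * B))"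
      unfolding BA using s2q K0 A B by (simp add: field_simps power2_eq_square)
    also have "\<dots> = q / (K0 * s2\<^sup>2) / A - q / (K0 * s2\<^sup>2) / B"
      using A B s2q K0 by (simp add: field_simps)
    finally have c1: "Om1 * (Om2 * tau * q) / (s2\<^sup>2 * A * (s2\<^sup>2 * B)) = q / (K0 * s2\<^sup>2) / A - q / (K0 * s2\<^sup>2) / B" .
    have c2: "(Y - q / K0) / s2\<^sup>2 / A = Y / (s2\<^sup>2 * A) - q / (K0 * s2\<^sup>2) / A"
      using s2q K0 A by (simp add: field_simps)
    have c3: "- Y / (s2\<^sup>2 * A) = - (Y / (s2\<^sup>2 * A))" by simp
    show ?thesis unfolding c1 c2 c3 by simp
  qed
  have "exp (- tau) * Rf Om1 s1 s2 K0 Y q n (Om2 * tau)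
      = exp (- tau) * (1 / (pi * s2\<^sup>2) ^ n / (A ^ (n - 1) * B) * exp (- (((Y - q / K0) / s2\<^sup>2) / A + (q / (K0 * s2\<^sup>2)) / B)))"
    unfolding Rf_def s s' pre ex by (rule refl)
  also have "\<dots> = 1 / (pi * s2\<^sup>2) ^ n * (exp (- (tau + ((Y - q / K0) / s2\<^sup>2) / A + (q / (K0 * s2\<^sup>2)) / B)) / (A powr (real n - 1) * B))"
    unfolding pw by (rule exp_gen)
  finally show ?thesis by (simp add: A_def B_def)
qed


lemma nn_pair4:
  fixes f :: "'a::euclidean_space \<times> 'b::euclidean_space \<times> 'c::euclidean_space \<times> 'd::euclidean_space \<Rightarrow> ennreal"
  assumes f[measurable]: "f \<in> borel_measurable (borel \<Otimes>\<^sub>M (borel \<Otimes>\<^sub>M (borel \<Otimes>\<^sub>M borel)))"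
  shows "(\<integral>\<^sup>+p. f p \<partial>lborel) = (\<integral>\<^sup>+a. \<integral>\<^sup>+b. \<integral>\<^sup>+c. \<integral>\<^sup>+d. f (a, b, c, d) \<partial>lborel \<partial>lborel \<partial>lborel \<partial>lborel)"
proof -
  have f1: "f \<in> borel_measurable (borel \<Otimes>\<^sub>M borel)" using f by (simp add: borel_prod)
  have f2: "(\<lambda>q. f (a, q)) \<in> borel_measurable (borel \<Otimes>\<^sub>M borel)" for a
  proof -
    have "(\<lambda>q. f (a, q)) \<in> borel_measurable (borel \<Otimes>\<^sub>M (borel \<Otimes>\<^sub>M borel))" by measurable
    then show ?thesis by (simp add: borel_prod)
  qed
  have f3: "(\<lambda>q. f (a, b, q)) \<in> borel_measurable (borel \<Otimes>\<^sub>M borel)" for a b by measurable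
  have "(\<integral>\<^sup>+p. f p \<partial>lborel) = (\<integral>\<^sup>+a. \<integral>\<^sup>+q. f (a, q) \<partial>lborel \<partial>lborel)"
    by (rule nn_pair[OF f1])
  also have "\<dots> = (\<integral>\<^sup>+a. \<integral>\<^sup>+b. \<integral>\<^sup>+q. f (a, b, q) \<partial>lborel \<partial>lborel \<partial>lborel)"
    by (intro nn_integral_cong nn_pair[OF f2])
  also have "\<dots> = (\<integral>\<^sup>+a. \<integral>\<^sup>+b. \<integral>\<^sup>+c. \<integral>\<^sup>+d. f (a, b, c, d) \<partial>lborel \<partial>lborel \<partial>lborel \<partial>lborel)"
    by (intro nn_integral_cong nn_pair[OF f3])
  finally show ?thesis .
qed





lemma cvd_meas[measurable]: "(\<lambda>z. cgauss_vec_density s z) \<in> borel_measurable borel"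
  unfolding cgauss_vec_density_def by measurable

lemma hv_meas[measurable (raw)]:
  fixes f :: "'a \<Rightarrow> complex^'n"
  assumes [measurable]: "S \<in> borel_measurable M" "f \<in> borel_measurable M"
  shows "(\<lambda>x. hv (S x) (f x)) \<in> borel_measurable M"
  unfolding hv_def by measurable

lemma cvd_hv: "cgauss_vec_density s z = hv (s\<^sup>2) z"
  by (simp add: cgauss_vec_density_def hv_def)

lemma hv_nonneg: "S \<ge> 0 \<Longrightarrow> hv S z \<ge> 0"
  by (simp add: hv_def)

lemma main:
  fixes P :: "'a measure" and X1 X2 :: "'a \<Rightarrow> complex" and u v :: "'a \<Rightarrow> complex^'n" and w0 :: "complex^'n"
  assumes P: "prob_space P" and pos: "Om1 > 0" "Om2 > 0" "s1 > 0" "s2 > 0" and w0: "w0 \<noteq> 0"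
    and D1: "distributed P lborel X1 (\<lambda>z. ennreal (cgauss_density Om1 z))"
    and D2: "distributed P lborel X2 (\<lambda>z. ennreal (cgauss_density Om2 z))"
    and Du: "distributed P lborel u (\<lambda>z. ennreal (cgauss_vec_density s1 z))"
    and Dv: "distributed P lborel v (\<lambda>z. ennreal (cgauss_vec_density s2 z))"
    and I1: "indep_rv P X1 (\<lambda>w. (X2 w, u w, v w))"
    and I2: "indep_rv P X2 (\<lambda>w. (u w, v w))"
    and I3: "indep_rv P u v"
  shows "distributed P lborel (\<lambda>w. (X1 w * X2 w) *s w0 + X2 w *s u w + v w)
     (\<lambda>x. ennreal (1 / (pi * s2\<^sup>2) ^ CARD('n) *
        Iint (Om2 * s1\<^sup>2 / s2\<^sup>2) ((1 + Om1 / s1\<^sup>2 * (norm w0)\<^sup>2) * (Om2 * s1\<^sup>2 / s2\<^sup>2))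
          (((norm x)\<^sup>2 - (cmod (cB w0 x))\<^sup>2 / (norm w0)\<^sup>2) / s2\<^sup>2)
          ((cmod (cB w0 x))\<^sup>2 / ((norm w0)\<^sup>2 * s2\<^sup>2))
          (real CARD('n) - 1)))"
proof -
  interpret prob_space P by (rule P)
  have [measurable]: "X1 \<in> borel_measurable P" "X2 \<in> borel_measurable P" "u \<in> borel_measurable P" "v \<in> borel_measurable P"
    using D1 D2 Du Dv by (auto dest!: distributed_measurable)
  have Gv: "(\<integral>\<^sup>+x. ennreal (exp (-(norm (x::complex^'n))\<^sup>2)) \<partial>lborel) = ennreal (pi ^ CARD('n))"
    by (rule G_from_density[OF _ pos(3)]) (use dist_total[OF P Du] in \<open>simp_all add: cgauss_vec_density_def\<close>)
  have Gc: "(\<integral>\<^sup>+x. ennreal (exp (-(norm (x::complex))\<^sup>2)) \<partial>lborel) = ennreal (pi ^ 1)"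
  proof (rule G_from_density[where sg = "sqrt Om1"])
    show "(\<integral>\<^sup>+x. ennreal (exp (- (norm (x::complex))\<^sup>2 / (sqrt Om1)\<^sup>2) / (pi * (sqrt Om1)\<^sup>2) ^ 1) \<partial>lborel) = 1"
      using dist_total[OF P D1] pos by (simp add: cgauss_density_def)
  qed (use pos in simp_all)
  note J = joint[OF P I1 D1 joint[OF P I2 D2 joint[OF P I3 Du Dv]]]
  define \<Phi> :: "complex \<times> complex \<times> (complex^'n) \<times> (complex^'n) \<Rightarrow> complex^'n"
    where "\<Phi> p = (fst p * fst (snd p)) *s w0 + fst (snd p) *s fst (snd (snd p)) + snd (snd (snd p))" for p
  have \<Phi>m[measurable]: "\<Phi> \<in> borel_measurable borel"
    unfolding \<Phi>_def[abs_def]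
    by (intro borel_measurable_continuous_onI continuous_intros)
  define F where "F x = (\<integral>\<^sup>+b. ennreal (cgauss_density Om2 b) *
      (\<integral>\<^sup>+a. ennreal (cgauss_density Om1 a * hv ((cmod b)\<^sup>2 * s1\<^sup>2 + s2\<^sup>2) (x - a *s (b *s w0))) \<partial>lborel) \<partial>lborel)" for x
  have key: "emeasure (distr P lborel (\<lambda>w. (X1 w * X2 w) *s w0 + X2 w *s u w + v w)) A = (\<integral>\<^sup>+x. F x * indicator A x \<partial>lborel)"
    if A[measurable]: "A \<in> sets borel" for A
  proof -
    let ?X0 = "\<lambda>w. (X1 w * X2 w) *s w0 + X2 w *s u w + v w"
    let ?g1 = "\<lambda>a. ennreal (cgauss_density Om1 a)" and ?g2 = "\<lambda>b. ennreal (cgauss_density Om2 b)"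
    let ?h1 = "\<lambda>c. ennreal (cgauss_vec_density s1 c)" and ?h2 = "\<lambda>d. ennreal (cgauss_vec_density s2 d)"
    have \<Phi>m': "\<Phi> \<in> borel_measurable (borel \<Otimes>\<^sub>M (borel \<Otimes>\<^sub>M (borel \<Otimes>\<^sub>M borel)))"
      using \<Phi>m by (simp add: borel_prod)
    have "emeasure (distr P lborel ?X0) A = emeasure P ((\<lambda>w. (X1 w, X2 w, u w, v w)) -` (\<Phi> -` A) \<inter> space P)"
      by (subst emeasure_distr) (auto simp: \<Phi>_def intro!: arg_cong2[where f=emeasure])
    also have "\<dots> = (\<integral>\<^sup>+p. (case p of (x, y) \<Rightarrow> ?g1 x * (case y of (x, y) \<Rightarrow> ?g2 x * (case y of (x, y) \<Rightarrow> ?h1 x * ?h2 y))) * indicator (\<Phi> -` A) p \<partial>lborel)"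
      by (rule distributed_emeasure[OF J]) (use measurable_sets_borel[OF \<Phi>m A] in simp)
    also have "\<dots> = (\<integral>\<^sup>+a. \<integral>\<^sup>+b. \<integral>\<^sup>+c. \<integral>\<^sup>+d. ?g1 a * (?g2 b * (?h1 c * ?h2 d)) * indicator A ((a * b) *s w0 + b *s c + d)
          \<partial>lborel \<partial>lborel \<partial>lborel \<partial>lborel)"
    proof -
      have ind: "indicator (\<Phi> -` A) p = indicator A (\<Phi> p)" for p by (simp split: split_indicator)
      have m: "(\<lambda>p. (case p of (x, y) \<Rightarrow> ?g1 x * (case y of (x, y) \<Rightarrow> ?g2 x * (case y of (x, y) \<Rightarrow> ?h1 x * ?h2 y))) * indicator A (\<Phi> p))
          \<in> borel_measurable (borel \<Otimes>\<^sub>M (borel \<Otimes>\<^sub>M (borel \<Otimes>\<^sub>M borel)))"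
        using \<Phi>m' by measurable
      show ?thesis unfolding ind by (subst nn_pair4[OF m]) (simp add: \<Phi>_def)
    qed
    also have "\<dots> = (\<integral>\<^sup>+a. \<integral>\<^sup>+b. \<integral>\<^sup>+x. ?g1 a * ?g2 b * indicator A x * ennreal (hv ((cmod b)\<^sup>2 * s1\<^sup>2 + s2\<^sup>2) (x - (a * b) *s w0))
          \<partial>lborel \<partial>lborel \<partial>lborel)"
    proof (rule nn_integral_cong, rule nn_integral_cong)
      fix a b :: complex
      define m where "m = (a * b) *s w0"
      have hpos: "cgauss_vec_density s z \<ge> 0" for s z by (simp add: cgauss_vec_density_def)
      have "(\<integral>\<^sup>+c. \<integral>\<^sup>+d. ?g1 a * (?g2 b * (?h1 c * ?h2 d)) * indicator A ((a * b) *s w0 + b *s c + d) \<partial>lborel \<partial>lborel)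
          = (\<integral>\<^sup>+c. \<integral>\<^sup>+x. ?g1 a * (?g2 b * (?h1 c * ?h2 (x - (m + b *s c)))) * indicator A x \<partial>lborel \<partial>lborel)"
      proof (rule nn_integral_cong)
        fix c
        have "(\<integral>\<^sup>+x. ?g1 a * (?g2 b * (?h1 c * ?h2 (x - (m + b *s c)))) * indicator A x \<partial>lborel)
            = (\<integral>\<^sup>+d. ?g1 a * (?g2 b * (?h1 c * ?h2 ((m + b *s c + d) - (m + b *s c)))) * indicator A (m + b *s c + d) \<partial>lborel)"
          by (rule trans_int[symmetric, of "\<lambda>x. ?g1 a * (?g2 b * (?h1 c * ?h2 (x - (m + b *s c)))) * indicator A x" "m + b *s c"]) measurable
        then show "(\<integral>\<^sup>+d. ?g1 a * (?g2 b * (?h1 c * ?h2 d)) * indicator A ((a * b) *s w0 + b *s c + d) \<partial>lborel)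
            = (\<integral>\<^sup>+x. ?g1 a * (?g2 b * (?h1 c * ?h2 (x - (m + b *s c)))) * indicator A x \<partial>lborel)"
          by (simp add: m_def add.assoc)
      qed
      also have "\<dots> = (\<integral>\<^sup>+x. \<integral>\<^sup>+c. ?g1 a * (?g2 b * (?h1 c * ?h2 (x - (m + b *s c)))) * indicator A x \<partial>lborel \<partial>lborel)"
        by (rule swap) measurable
      also have "\<dots> = (\<integral>\<^sup>+x. ?g1 a * ?g2 b * indicator A x * ennreal (hv ((cmod b)\<^sup>2 * s1\<^sup>2 + s2\<^sup>2) (x - m)) \<partial>lborel)"
      proof (rule nn_integral_cong)
        fix x
        have "(\<integral>\<^sup>+c. ?g1 a * (?g2 b * (?h1 c * ?h2 (x - (m + b *s c)))) * indicator A x \<partial>lborel)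
            = (\<integral>\<^sup>+c. (?g1 a * ?g2 b * indicator A x) * ennreal (hv (s1\<^sup>2) c * hv (s2\<^sup>2) ((x - m) - b *s c)) \<partial>lborel)"
          by (intro nn_integral_cong) (simp add: cvd_hv ennreal_mult''[OF hv_nonneg] diff_diff_add mult_ac)
        also have "\<dots> = (?g1 a * ?g2 b * indicator A x) * (\<integral>\<^sup>+c. ennreal (hv (s1\<^sup>2) c * hv (s2\<^sup>2) ((x - m) - b *s c)) \<partial>lborel)"
          by (rule nn_integral_cmult) measurable
        also have "(\<integral>\<^sup>+c. ennreal (hv (s1\<^sup>2) c * hv (s2\<^sup>2) ((x - m) - b *s c)) \<partial>lborel) = ennreal (hv ((cmod b)\<^sup>2 * s1\<^sup>2 + s2\<^sup>2) (x - m))"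
          by (rule conv[OF Gv]) (use pos in simp_all)
        finally show "(\<integral>\<^sup>+c. ?g1 a * (?g2 b * (?h1 c * ?h2 (x - (m + b *s c)))) * indicator A x \<partial>lborel)
            = ?g1 a * ?g2 b * indicator A x * ennreal (hv ((cmod b)\<^sup>2 * s1\<^sup>2 + s2\<^sup>2) (x - m))" .
      qed
      finally show "(\<integral>\<^sup>+c. \<integral>\<^sup>+d. ?g1 a * (?g2 b * (?h1 c * ?h2 d)) * indicator A ((a * b) *s w0 + b *s c + d) \<partial>lborel \<partial>lborel)
          = (\<integral>\<^sup>+x. ?g1 a * ?g2 b * indicator A x * ennreal (hv ((cmod b)\<^sup>2 * s1\<^sup>2 + s2\<^sup>2) (x - (a * b) *s w0)) \<partial>lborel)"
        by (simp add: m_def)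
    qed
    also have "\<dots> = (\<integral>\<^sup>+x. F x * indicator A x \<partial>lborel)"
    proof -
      let ?Q = "\<lambda>a b x. ?g1 a * ?g2 b * indicator A x * ennreal (hv ((cmod b)\<^sup>2 * s1\<^sup>2 + s2\<^sup>2) (x - (a * b) *s w0))"
      have "(\<integral>\<^sup>+a. \<integral>\<^sup>+b. \<integral>\<^sup>+x. ?Q a b x \<partial>lborel \<partial>lborel \<partial>lborel) = (\<integral>\<^sup>+a. \<integral>\<^sup>+x. \<integral>\<^sup>+b. ?Q a b x \<partial>lborel \<partial>lborel \<partial>lborel)"
        by (rule nn_integral_cong, rule swap) measurable
      also have "\<dots> = (\<integral>\<^sup>+x. \<integral>\<^sup>+a. \<integral>\<^sup>+b. ?Q a b x \<partial>lborel \<partial>lborel \<partial>lborel)"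
        by (rule swap) measurable
      also have "\<dots> = (\<integral>\<^sup>+x. \<integral>\<^sup>+b. \<integral>\<^sup>+a. ?Q a b x \<partial>lborel \<partial>lborel \<partial>lborel)"
        by (rule nn_integral_cong, rule swap) measurable
      also have "\<dots> = (\<integral>\<^sup>+x. F x * indicator A x \<partial>lborel)"
      proof (rule nn_integral_cong)
        fix x
        have "(\<integral>\<^sup>+b. \<integral>\<^sup>+a. ?Q a b x \<partial>lborel \<partial>lborel)
           = (\<integral>\<^sup>+b. indicator A x * (?g2 b * (\<integral>\<^sup>+a. ennreal (cgauss_density Om1 a * hv ((cmod b)\<^sup>2 * s1\<^sup>2 + s2\<^sup>2) (x - a *s (b *s w0))) \<partial>lborel)) \<partial>lborel)"
        proof (rule nn_integral_cong)
          fix b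
          have "(\<integral>\<^sup>+a. ?Q a b x \<partial>lborel) = (\<integral>\<^sup>+a. (indicator A x * ?g2 b) * ennreal (cgauss_density Om1 a * hv ((cmod b)\<^sup>2 * s1\<^sup>2 + s2\<^sup>2) (x - a *s (b *s w0))) \<partial>lborel)"
            by (rule nn_integral_cong) (simp add: ennreal_mult''[OF hv_nonneg] mult_ac)
          also have "\<dots> = (indicator A x * ?g2 b) * (\<integral>\<^sup>+a. ennreal (cgauss_density Om1 a * hv ((cmod b)\<^sup>2 * s1\<^sup>2 + s2\<^sup>2) (x - a *s (b *s w0))) \<partial>lborel)"
            by (rule nn_integral_cmult) measurable
          finally show "(\<integral>\<^sup>+a. ?Q a b x \<partial>lborel) = indicator A x * (?g2 b * (\<integral>\<^sup>+a. ennreal (cgauss_density Om1 a * hv ((cmod b)\<^sup>2 * s1\<^sup>2 + s2\<^sup>2) (x - a *s (b *s w0))) \<partial>lborel))"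
            by (simp add: mult.assoc)
        qed
        also have "\<dots> = indicator A x * F x"
          unfolding F_def by (rule nn_integral_cmult) measurable
        finally show "(\<integral>\<^sup>+b. \<integral>\<^sup>+a. ?Q a b x \<partial>lborel \<partial>lborel) = F x * indicator A x"
          by (simp add: mult.commute)
      qed
      finally show ?thesis .
    qed
    finally show ?thesis .
  qed
  have Fm: "F \<in> borel_measurable borel"
    unfolding F_def[abs_def] by measurable
  have deq: "distr P lborel (\<lambda>w. (X1 w * X2 w) *s w0 + X2 w *s u w + v w) = density lborel F"
    by (rule measure_eqI) (simp_all add: key emeasure_density Fm)
  have Fval: "F x = ennreal (1 / (pi * s2\<^sup>2) ^ CARD('n) *
        Iint (Om2 * s1\<^sup>2 / s2\<^sup>2) ((1 + Om1 / s1\<^sup>2 * (norm w0)\<^sup>2) * (Om2 * s1\<^sup>2 / s2\<^sup>2))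
          (((norm x)\<^sup>2 - (cmod (cB w0 x))\<^sup>2 / (norm w0)\<^sup>2) / s2\<^sup>2)
          ((cmod (cB w0 x))\<^sup>2 / ((norm w0)\<^sup>2 * s2\<^sup>2))
          (real CARD('n) - 1))" for x
  proof -
    define K0 where "K0 = (norm w0)\<^sup>2"
    define q where "q = (cmod (cB w0 x))\<^sup>2"
    define Y where "Y = (norm x)\<^sup>2"
    define n where "n = CARD('n)"
    define e1 where "e1 = Om2 * s1\<^sup>2 / s2\<^sup>2"
    define e2 where "e2 = (1 + Om1 / s1\<^sup>2 * K0) * (Om2 * s1\<^sup>2 / s2\<^sup>2)"
    define C where "C = 1 / (pi * s2\<^sup>2) ^ n"
    have K0: "K0 > 0" using w0 by (simp add: K0_def)
    have n1: "n \<ge> 1" unfolding n_def using card_gt_0_iff[of "UNIV::'n set"] by simp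
    have e1: "e1 \<ge> 0" and e2: "e2 \<ge> 0" using pos K0 by (simp_all add: e1_def e2_def add_nonneg_nonneg)
    have cBs: "cB (b *s w0) x = cnj b * cB w0 x" for b by (simp add: cB_def sum_distrib_left mult_ac)
    have Rm[measurable]: "(\<lambda>t. Rf Om1 s1 s2 K0 Y q n t) \<in> borel_measurable borel"
      unfolding Rf_def by measurable
    have inner: "(\<integral>\<^sup>+a. ennreal (cgauss_density Om1 a * hv ((cmod b)\<^sup>2 * s1\<^sup>2 + s2\<^sup>2) (x - a *s (b *s w0))) \<partial>lborel)
        = ennreal (Rf Om1 s1 s2 K0 Y q n ((cmod b)\<^sup>2))" for b
    proof -
      have S: "(cmod b)\<^sup>2 * s1\<^sup>2 + s2\<^sup>2 > 0" using pos by (simp add: add_nonneg_pos)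
      have "(\<integral>\<^sup>+a. ennreal (cgauss_density Om1 a * hv ((cmod b)\<^sup>2 * s1\<^sup>2 + s2\<^sup>2) (x - a *s (b *s w0))) \<partial>lborel)
        = (\<integral>\<^sup>+a. ennreal (exp (- (cmod a)\<^sup>2 / Om1) / (pi * Om1) * hv ((cmod b)\<^sup>2 * s1\<^sup>2 + s2\<^sup>2) (x - a *s (b *s w0))) \<partial>lborel)"
        by (simp add: cgauss_density_def)
      also have "\<dots> = ennreal (((cmod b)\<^sup>2 * s1\<^sup>2 + s2\<^sup>2) / (((cmod b)\<^sup>2 * s1\<^sup>2 + s2\<^sup>2) + Om1 * (norm (b *s w0))\<^sup>2) / (pi * ((cmod b)\<^sup>2 * s1\<^sup>2 + s2\<^sup>2)) ^ CARD('n)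
          * exp (- (norm x)\<^sup>2 / ((cmod b)\<^sup>2 * s1\<^sup>2 + s2\<^sup>2) + Om1 * (cmod (cB (b *s w0) x))\<^sup>2 / (((cmod b)\<^sup>2 * s1\<^sup>2 + s2\<^sup>2) * (((cmod b)\<^sup>2 * s1\<^sup>2 + s2\<^sup>2) + Om1 * (norm (b *s w0))\<^sup>2))))"
        by (rule cint) (use Gc pos S in simp_all)
      also have "\<dots> = ennreal (Rf Om1 s1 s2 K0 Y q n ((cmod b)\<^sup>2))"
        by (simp add: Rf_def cBs norm_cs power_mult_distrib K0_def q_def Y_def n_def norm_mult)
      finally show ?thesis .
    qed
    have "F x = (\<integral>\<^sup>+b. ennreal (cgauss_density Om2 b) * ennreal (Rf Om1 s1 s2 K0 Y q n ((cmod b)\<^sup>2)) \<partial>lborel)"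
      unfolding F_def inner ..
    also have "\<dots> = (\<integral>\<^sup>+b. ennreal (exp (- (cmod b)\<^sup>2 / Om2) / (pi * Om2) * Rf Om1 s1 s2 K0 Y q n ((cmod b)\<^sup>2)) \<partial>lborel)"
      using pos by (intro nn_integral_cong, subst ennreal_mult'[symmetric]) (simp_all add: cgauss_density_def)
    also have "\<dots> = ennreal pi * (\<integral>\<^sup>+t. ennreal (exp (- t / Om2) / (pi * Om2) * Rf Om1 s1 s2 K0 Y q n t) * indicator {0..} t \<partial>lborel)"
      by (rule radial[where f="\<lambda>t. ennreal (exp (- t / Om2) / (pi * Om2) * Rf Om1 s1 s2 K0 Y q n t)"]) measurable
    also have "\<dots> = (\<integral>\<^sup>+t. ennreal (indicator {0..} t * (exp (- t / Om2) / Om2 * Rf Om1 s1 s2 K0 Y q n t)) \<partial>lborel)"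
      by (subst nn_integral_cmult[symmetric]) (use pos in \<open>auto intro!: nn_integral_cong simp: ennreal_mult'[symmetric] split: split_indicator\<close>)
    also have "\<dots> = ennreal \<bar>Om2\<bar> * (\<integral>\<^sup>+tau. ennreal (indicator {0..} (0 + Om2 * tau) * (exp (- (0 + Om2 * tau) / Om2) / Om2 * Rf Om1 s1 s2 K0 Y q n (0 + Om2 * tau))) \<partial>lborel)"
      by (rule nn_integral_real_affine) (use pos in simp_all)
    also have "\<dots> = (\<integral>\<^sup>+tau. ennreal (indicator {0..} tau * (exp (- tau) * Rf Om1 s1 s2 K0 Y q n (Om2 * tau))) \<partial>lborel)"
    proof -
      have "ennreal \<bar>Om2\<bar> * ennreal (indicator {0..} (0 + Om2 * tau) * (exp (- (0 + Om2 * tau) / Om2) / Om2 * Rf Om1 s1 s2 K0 Y q n (0 + Om2 * tau)))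
          = ennreal (indicator {0..} tau * (exp (- tau) * Rf Om1 s1 s2 K0 Y q n (Om2 * tau)))" for tau
        using pos by (subst ennreal_mult'[symmetric]) (auto split: split_indicator simp: zero_le_mult_iff)
      then show ?thesis by (subst nn_integral_cmult[symmetric]) simp_all
    qed
    also have "\<dots> = (\<integral>\<^sup>+tau. ennreal C * ennreal (indicator {0..} tau * (exp (- (tau + ((Y - q / K0) / s2\<^sup>2) / (1 + e1 * tau) + (q / (K0 * s2\<^sup>2)) / (1 + e2 * tau))) / ((1 + e1 * tau) powr (real n - 1) * (1 + e2 * tau)))) \<partial>lborel)"
    proof (rule nn_integral_cong)
      fix tau :: real
      show "ennreal (indicator {0..} tau * (exp (- tau) * Rf Om1 s1 s2 K0 Y q n (Om2 * tau)))
        = ennreal C * ennreal (indicator {0..} tau * (exp (- (tau + ((Y - q / K0) / s2\<^sup>2) / (1 + e1 * tau) + (q / (K0 * s2\<^sup>2)) / (1 + e2 * tau))) / ((1 + e1 * tau) powr (real n - 1) * (1 + e2 * tau))))"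
      proof (cases "tau \<ge> 0")
        case True
        have "exp (- tau) * Rf Om1 s1 s2 K0 Y q n (Om2 * tau) = C * (exp (- (tau + ((Y - q / K0) / s2\<^sup>2) / (1 + e1 * tau) + (q / (K0 * s2\<^sup>2)) / (1 + e2 * tau))) / ((1 + e1 * tau) powr (real n - 1) * (1 + e2 * tau)))"
          unfolding C_def e1_def e2_def by (rule alg_R[OF True pos K0 n1])
        then show ?thesis using True by (simp add: C_def ennreal_mult'[symmetric])
      qed simp
    qed
    also have "\<dots> = ennreal C * ennreal (Iint e1 e2 ((Y - q / K0) / s2\<^sup>2) (q / (K0 * s2\<^sup>2)) (real n - 1))"
      by (subst iint_nn[OF e1 e2]) (use n1 in \<open>simp_all add: nn_integral_cmult\<close>)
    also have "\<dots> = ennreal (C * Iint e1 e2 ((Y - q / K0) / s2\<^sup>2) (q / (K0 * s2\<^sup>2)) (real n - 1))"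
      by (rule ennreal_mult'[symmetric]) (simp add: C_def)
    finally show ?thesis by (simp add: C_def e1_def e2_def K0_def q_def Y_def n_def)
  qed
  have Feq: "F = (\<lambda>x. ennreal (1 / (pi * s2\<^sup>2) ^ CARD('n) *
        Iint (Om2 * s1\<^sup>2 / s2\<^sup>2) ((1 + Om1 / s1\<^sup>2 * (norm w0)\<^sup>2) * (Om2 * s1\<^sup>2 / s2\<^sup>2))
          (((norm x)\<^sup>2 - (cmod (cB w0 x))\<^sup>2 / (norm w0)\<^sup>2) / s2\<^sup>2)
          ((cmod (cB w0 x))\<^sup>2 / ((norm w0)\<^sup>2 * s2\<^sup>2))
          (real CARD('n) - 1)))"
    using Fval by (simp add: fun_eq_iff)
  show ?thesis
    unfolding distributed_def Feq[symmetric] using deq Fm by simp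
qed




lemma cid: "((cmod a)\<^sup>2 + (cmod b)\<^sup>2) * (1 + (cmod c)\<^sup>2) - (cmod (a + cnj c * b))\<^sup>2 = (cmod (b - c * a))\<^sup>2"
  unfolding cmod_power2 by (simp add: algebra_simps power2_eq_square)

lemma vec2_norm: "(norm (vector [1, c] :: complex^2))\<^sup>2 = 1 + (cmod c)\<^sup>2"
  by (simp add: norm_vec_sq sum_2)

lemma vec2_cB: "cB (vector [1, c] :: complex^2) x = x $ 1 + cnj c * x $ 2"
  by (simp add: cB_def sum_2)

lemma vec2_nz: "(vector [1, c] :: complex^2) \<noteq> 0"
proof
  assume "(vector [1, c] :: complex^2) = 0"
  then have "(vector [1, c] :: complex^2) $ 1 = 0" by simp
  then show False by simp
qed

lemma norm2_sum: "(norm (x :: complex^2))\<^sup>2 = (cmod (x$1))\<^sup>2 + (cmod (x$2))\<^sup>2"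
  by (simp add: norm_vec_sq sum_2)

lemma axis_cB: "cB (axis p 1 :: complex^'m) y = y $ p"
proof -
  have "\<And>i. cnj (axis p 1 $ i) * y $ i = (if i = p then y $ p else 0)"
    by (simp add: axis_def)
  then show ?thesis by (simp add: cB_def)
qed

lemma axis_norm: "(norm (axis p (1::complex) :: complex^'m))\<^sup>2 = 1"
proof -
  have "\<And>i. (cmod (axis p (1::complex) $ i))\<^sup>2 = (if i = p then 1 else 0)"
    by (simp add: axis_def)
  then show ?thesis by (simp add: norm_vec_sq)
qed




theorem lemma1:
  fixes P :: "'a measure"
    and Om1 Om2 sigma1 sigma2 :: real
    and p :: "'m::finite"
    and c :: complex
    and X1 X2 :: "'a \<Rightarrow> complex"
    and x1 x2 :: "'a \<Rightarrow> complex ^ 2"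
    and y1 y2 :: "'a \<Rightarrow> complex ^ 'm"
  assumes "prob_space P"
    and "Om1 > 0" "Om2 > 0" "sigma1 > 0" "sigma2 > 0"
    and "CARD('m) \<ge> 2"
    and "distributed P lborel X1 (\<lambda>z. ennreal (cgauss_density Om1 z))"
    and "distributed P lborel X2 (\<lambda>z. ennreal (cgauss_density Om2 z))"
    and "distributed P lborel x1 (\<lambda>z. ennreal (cgauss_vec_density sigma1 z))"
    and "distributed P lborel x2 (\<lambda>z. ennreal (cgauss_vec_density sigma2 z))"
    and "distributed P lborel y1 (\<lambda>z. ennreal (cgauss_vec_density sigma1 z))"
    and "distributed P lborel y2 (\<lambda>z. ennreal (cgauss_vec_density sigma2 z))"
    and "indep_rv P X1 (\<lambda>w. (X2 w, x1 w, x2 w, y1 w, y2 w))"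
    and "indep_rv P X2 (\<lambda>w. (x1 w, x2 w, y1 w, y2 w))"
    and "indep_rv P x1 (\<lambda>w. (x2 w, y1 w, y2 w))"
    and "indep_rv P x2 (\<lambda>w. (y1 w, y2 w))"
    and "indep_rv P y1 y2"
  shows
    "distributed P lborel
       (\<lambda>w. (X1 w * X2 w) *s vector [1, c] + X2 w *s x1 w + x2 w)
       (\<lambda>x. ennreal (1 / (pi * sigma2\<^sup>2)\<^sup>2 *
          Iint (Om2 * sigma1\<^sup>2 / sigma2\<^sup>2)
               ((1 + Om1 / sigma1\<^sup>2 * (1 + (cmod c)\<^sup>2)) * (Om2 * sigma1\<^sup>2 / sigma2\<^sup>2))
               ((cmod (x $ 2 - c * x $ 1))\<^sup>2 / ((1 + (cmod c)\<^sup>2) * sigma2\<^sup>2))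
               ((cmod (x $ 1 + cnj c * x $ 2))\<^sup>2 / ((1 + (cmod c)\<^sup>2) * sigma2\<^sup>2))
               1))
     \<and> distributed P lborel
       (\<lambda>w. (X1 w * X2 w) *s axis p 1 + X2 w *s y1 w + y2 w)
       (\<lambda>y. ennreal (1 / (pi * sigma2\<^sup>2) ^ CARD('m) *
          Iint (Om2 * sigma1\<^sup>2 / sigma2\<^sup>2)
               ((1 + Om1 / sigma1\<^sup>2) * (Om2 * sigma1\<^sup>2 / sigma2\<^sup>2))
               (((norm y)\<^sup>2 - (cmod (y $ p))\<^sup>2) / sigma2\<^sup>2)
               ((cmod (y $ p))\<^sup>2 / sigma2\<^sup>2)
               (real CARD('m) - 1)))"
proof -
  note P = assms(1) and pos = assms(2-5) and card = assms(6)
  note D1 = assms(7) and D2 = assms(8) and Dx1 = assms(9) and Dx2 = assms(10) and Dy1 = assms(11) and Dy2 = assms(12)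
  note J1 = assms(13) and J2 = assms(14) and J3 = assms(15) and J4 = assms(16) and J5 = assms(17)
  have c1: "continuous_on UNIV f \<Longrightarrow> f \<in> borel_measurable borel" for f :: "'x::topological_space \<Rightarrow> 'y::topological_space"
    by (rule borel_measurable_continuous_onI)
  have I1: "indep_rv P X1 (\<lambda>w. (X2 w, x1 w, x2 w))"
    using indep_rv_comp[OF J1 c1[of "\<lambda>p. (fst p, fst (snd p), fst (snd (snd p)))"]]
    by (simp add: continuous_intros)
  have I2: "indep_rv P X2 (\<lambda>w. (x1 w, x2 w))"
    using indep_rv_comp[OF J2 c1[of "\<lambda>p. (fst p, fst (snd p))"]]
    by (simp add: continuous_intros)
  have I3: "indep_rv P x1 x2"
    using indep_rv_comp[OF J3 c1[of fst]] by (simp add: continuous_intros)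
  have A: "distributed P lborel (\<lambda>w. (X1 w * X2 w) *s vector [1, c] + X2 w *s x1 w + x2 w)
     (\<lambda>x. ennreal (1 / (pi * sigma2\<^sup>2) ^ CARD(2) *
        Iint (Om2 * sigma1\<^sup>2 / sigma2\<^sup>2) ((1 + Om1 / sigma1\<^sup>2 * (norm (vector [1, c] :: complex^2))\<^sup>2) * (Om2 * sigma1\<^sup>2 / sigma2\<^sup>2))
          (((norm x)\<^sup>2 - (cmod (cB (vector [1, c]) x))\<^sup>2 / (norm (vector [1, c] :: complex^2))\<^sup>2) / sigma2\<^sup>2)
          ((cmod (cB (vector [1, c]) x))\<^sup>2 / ((norm (vector [1, c] :: complex^2))\<^sup>2 * sigma2\<^sup>2))
          (real CARD(2) - 1)))"
    by (rule main[OF P pos vec2_nz D1 D2 Dx1 Dx2 I1 I2 I3])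
  have eqA: "((norm x)\<^sup>2 - (cmod (x $ 1 + cnj c * x $ 2))\<^sup>2 / (1 + (cmod c)\<^sup>2)) / sigma2\<^sup>2
      = (cmod (x $ 2 - c * x $ 1))\<^sup>2 / ((1 + (cmod c)\<^sup>2) * sigma2\<^sup>2)" for x :: "complex^2"
  proof -
    have k: "1 + (cmod c)\<^sup>2 > 0" by (simp add: add_pos_nonneg)
    have "(norm x)\<^sup>2 - (cmod (x $ 1 + cnj c * x $ 2))\<^sup>2 / (1 + (cmod c)\<^sup>2)
        = (((cmod (x$1))\<^sup>2 + (cmod (x$2))\<^sup>2) * (1 + (cmod c)\<^sup>2) - (cmod (x $ 1 + cnj c * x $ 2))\<^sup>2) / (1 + (cmod c)\<^sup>2)"
      using k by (simp add: norm2_sum field_simps)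
    also have "\<dots> = (cmod (x $ 2 - c * x $ 1))\<^sup>2 / (1 + (cmod c)\<^sup>2)" by (simp only: cid)
    finally show ?thesis by simp
  qed
  have first: "distributed P lborel
       (\<lambda>w. (X1 w * X2 w) *s vector [1, c] + X2 w *s x1 w + x2 w)
       (\<lambda>x. ennreal (1 / (pi * sigma2\<^sup>2)\<^sup>2 *
          Iint (Om2 * sigma1\<^sup>2 / sigma2\<^sup>2)
               ((1 + Om1 / sigma1\<^sup>2 * (1 + (cmod c)\<^sup>2)) * (Om2 * sigma1\<^sup>2 / sigma2\<^sup>2))
               ((cmod (x $ 2 - c * x $ 1))\<^sup>2 / ((1 + (cmod c)\<^sup>2) * sigma2\<^sup>2))
               ((cmod (x $ 1 + cnj c * x $ 2))\<^sup>2 / ((1 + (cmod c)\<^sup>2) * sigma2\<^sup>2))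
               1))"
    using A by (simp add: vec2_norm vec2_cB eqA)
  have I1': "indep_rv P X1 (\<lambda>w. (X2 w, y1 w, y2 w))"
    using indep_rv_comp[OF J1 c1[of "\<lambda>p. (fst p, fst (snd (snd (snd p))), snd (snd (snd (snd p))))"]]
    by (simp add: continuous_intros)
  have I2': "indep_rv P X2 (\<lambda>w. (y1 w, y2 w))"
    using indep_rv_comp[OF J2 c1[of "\<lambda>p. (fst (snd (snd p)), snd (snd (snd p)))"]]
    by (simp add: continuous_intros)
  have axnz: "(axis p 1 :: complex^'m) \<noteq> 0"
    using axis_norm[of p] by auto
  have B: "distributed P lborel (\<lambda>w. (X1 w * X2 w) *s axis p 1 + X2 w *s y1 w + y2 w)
     (\<lambda>x. ennreal (1 / (pi * sigma2\<^sup>2) ^ CARD('m) *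
        Iint (Om2 * sigma1\<^sup>2 / sigma2\<^sup>2) ((1 + Om1 / sigma1\<^sup>2 * (norm (axis p 1 :: complex^'m))\<^sup>2) * (Om2 * sigma1\<^sup>2 / sigma2\<^sup>2))
          (((norm x)\<^sup>2 - (cmod (cB (axis p 1) x))\<^sup>2 / (norm (axis p 1 :: complex^'m))\<^sup>2) / sigma2\<^sup>2)
          ((cmod (cB (axis p 1) x))\<^sup>2 / ((norm (axis p 1 :: complex^'m))\<^sup>2 * sigma2\<^sup>2))
          (real CARD('m) - 1)))"
    by (rule main[OF P pos axnz D1 D2 Dy1 Dy2 I1' I2' J5])
  have second: "distributed P lborel
       (\<lambda>w. (X1 w * X2 w) *s axis p 1 + X2 w *s y1 w + y2 w)
       (\<lambda>y. ennreal (1 / (pi * sigma2\<^sup>2) ^ CARD('m) *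
          Iint (Om2 * sigma1\<^sup>2 / sigma2\<^sup>2)
               ((1 + Om1 / sigma1\<^sup>2) * (Om2 * sigma1\<^sup>2 / sigma2\<^sup>2))
               (((norm y)\<^sup>2 - (cmod (y $ p))\<^sup>2) / sigma2\<^sup>2)
               ((cmod (y $ p))\<^sup>2 / sigma2\<^sup>2)
               (real CARD('m) - 1)))"
    using B by (simp add: axis_norm axis_cB)
  show ?thesis using first second by simp
qed


end
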